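(* Let $d\ge 1$, $\sigma>0$, and let $L$ be the operator on $C^2(\mathbb{R}^d\times\mathbb{R}^d)$ given by \[(Lf)(p,\xi)=\sum_{j=1}^d p_j\frac{\partial f}{\partial \xi_j}(p,\xi)+\frac{\sigma^2}{2}\Delta_p f(p,\xi),\qquad p,\xi\in\mathbb{R}^d .\] For $\alpha\in\mathbb{R}$ and $\beta\ge 0$ define, for smooth $f,g$, \[\Gamma^{\alpha,\beta}(f,g)=\sum_{i=1}^d\Big(\frac{\partial f}{\partial p_i}-\alpha\frac{\partial f}{\partial \xi_i}\Big)\Big(\frac{\partial g}{\partial p_i}-\alpha\frac{\partial g}{\partial \xi_i}\Big)+\beta\sum_{i=1}^d\frac{\partial f}{\partial \xi_i}\frac{\partial g}{\partial \xi_i},\] $\Gamma^{\alpha,\beta}(f)=\Gamma^{\alpha,\beta}(f,f)$, and $\Gamma_2^{\alpha,\beta}(f)=\frac12 L\Gamma^{\alpha,\beta}(f)-\Gamma^{\alpha,\beta}(f,Lf)$. Then for every $f\in C^\infty(\mathbb{R}^d\times\mathbb{R}^d)$, \[\Gamma_2^{\alpha,\beta}(f)\ge \alpha\|\nabla_\xi f\|^2-\langle\nabla_\xi f,\nabla_p f\rangle .\]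
   Context: $\Delta_p$ denotes the Laplacian on $\mathbb{R}^d$ acting in the variable $p$; $\nabla_p$, $\nabla_\xi$ denote the Euclidean gradients in the variables $p$ and $\xi$; $\|\cdot\|$ and $\langle\cdot,\cdot\rangle$ are the Euclidean norm and inner product on $\mathbb{R}^d$. *)

theory Defs
  imports "HOL-Analysis.Analysis"
begin

type_synonym 'n phase = "(real^'n) \<times> (real^'n)"

fun Ck :: "nat \<Rightarrow> ('a::euclidean_space \<Rightarrow> real) \<Rightarrow> bool" where
  "Ck 0 g = continuous_on UNIV g"
| "Ck (Suc k) g = (g differentiable_on UNIV \<and>
      (\<forall>v. Ck k (\<lambda>x. frechet_derivative g (at x) v)))"

definition smooth :: "('a::euclidean_space \<Rightarrow> real) \<Rightarrow> bool" where
  "smooth g \<longleftrightarrow> (\<forall>k. Ck k g)"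

definition dp :: "'n::finite \<Rightarrow> ('n phase \<Rightarrow> real) \<Rightarrow> 'n phase \<Rightarrow> real" where
  "dp i f x = frechet_derivative f (at x) (axis i 1, 0)"

definition dxi :: "'n::finite \<Rightarrow> ('n phase \<Rightarrow> real) \<Rightarrow> 'n phase \<Rightarrow> real" where
  "dxi i f x = frechet_derivative f (at x) (0, axis i 1)"

definition Lop :: "real \<Rightarrow> ('n::finite phase \<Rightarrow> real) \<Rightarrow> 'n phase \<Rightarrow> real" where
  "Lop \<sigma> f x = (\<Sum>j\<in>UNIV. (fst x $ j) * dxi j f x)
                 + \<sigma>\<^sup>2 / 2 * (\<Sum>j\<in>UNIV. dp j (dp j f) x)"

definition Gam :: "real \<Rightarrow> real \<Rightarrow> ('n::finite phase \<Rightarrow> real) \<Rightarrow> ('n phase \<Rightarrow> real) \<Rightarrow> 'n phase \<Rightarrow> real" where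
  "Gam \<alpha> \<beta> f g x = (\<Sum>i\<in>UNIV. (dp i f x - \<alpha> * dxi i f x) * (dp i g x - \<alpha> * dxi i g x))
                     + \<beta> * (\<Sum>i\<in>UNIV. dxi i f x * dxi i g x)"

definition Gam2 :: "real \<Rightarrow> real \<Rightarrow> real \<Rightarrow> ('n::finite phase \<Rightarrow> real) \<Rightarrow> 'n phase \<Rightarrow> real" where
  "Gam2 \<sigma> \<alpha> \<beta> f x = 1/2 * Lop \<sigma> (Gam \<alpha> \<beta> f f) x - Gam \<alpha> \<beta> f (Lop \<sigma> f) x"

definition grad_p :: "('n::finite phase \<Rightarrow> real) \<Rightarrow> 'n phase \<Rightarrow> real^'n" where
  "grad_p f x = (\<chi> i. dp i f x)"

definition grad_xi :: "('n::finite phase \<Rightarrow> real) \<Rightarrow> 'n phase \<Rightarrow> real^'n" where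
  "grad_xi f x = (\<chi> i. dxi i f x)"

end

theory Submission
  imports Defs
begin


definition Dd :: "'a::euclidean_space \<Rightarrow> ('a \<Rightarrow> real) \<Rightarrow> 'a \<Rightarrow> real" where
  "Dd v g x = frechet_derivative g (at x) v"

lemma Dd_eq: "(g has_derivative g') (at x) \<Longrightarrow> Dd v g x = g' v"
  unfolding Dd_def using frechet_derivative_at by metis

lemma Dd_works: "g differentiable (at x) \<Longrightarrow> (g has_derivative (\<lambda>v. Dd v g x)) (at x)"
  unfolding Dd_def using frechet_derivative_works by (metis eta_contract_eq)

lemma Dd_add: "g differentiable (at x) \<Longrightarrow> h differentiable (at x) \<Longrightarrow>
   Dd v (\<lambda>y. g y + h y) x = Dd v g x + Dd v h x"
  by (rule Dd_eq) (intro has_derivative_add Dd_works)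

lemma Dd_diff: "g differentiable (at x) \<Longrightarrow> h differentiable (at x) \<Longrightarrow>
   Dd v (\<lambda>y. g y - h y) x = Dd v g x - Dd v h x"
  by (rule Dd_eq) (intro has_derivative_diff Dd_works)

lemma Dd_mult: "g differentiable (at x) \<Longrightarrow> h differentiable (at x) \<Longrightarrow>
   Dd v (\<lambda>y. g y * h y) x = g x * Dd v h x + Dd v g x * h x"
  by (rule Dd_eq) (intro has_derivative_mult Dd_works)

lemma Dd_cmult: assumes "g differentiable (at x)" shows
   "Dd v (\<lambda>y. c * g y) x = c * Dd v g x"
proof -
  have "Dd v (\<lambda>y. c) x = 0" by (rule Dd_eq[where g'="\<lambda>_. 0", simplified]) (rule has_derivative_const)
  thus ?thesis using Dd_mult[of "\<lambda>y. c" x g v] assms by simp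
qed

lemma Dd_sum: "(\<And>i. i \<in> I \<Longrightarrow> G i differentiable (at x)) \<Longrightarrow>
   Dd v (\<lambda>y. \<Sum>i\<in>I. G i y) x = (\<Sum>i\<in>I. Dd v (G i) x)"
  by (rule Dd_eq) (intro has_derivative_sum Dd_works, auto)

lemma Dd_fst: "Dd v (\<lambda>y::'n::finite phase. fst y $ j) x = fst v $ j"
proof (rule Dd_eq)
  have "bounded_linear (\<lambda>y::'n phase. fst y $ j)"
    by (rule bounded_linear_compose[OF bounded_linear_vec_nth bounded_linear_fst])
  thus "((\<lambda>y::'n phase. fst y $ j) has_derivative (\<lambda>y. fst y $ j)) (at x)"
    by (rule bounded_linear_imp_has_derivative)
qed

lemma line_deriv:
  assumes "\<And>z. g differentiable (at z)"
  shows "((\<lambda>r. g (y + r *\<^sub>R v)) has_real_derivative Dd v g (y + r *\<^sub>R v)) (at r)"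
proof -
  let ?z = "y + r *\<^sub>R v"
  have d1: "((\<lambda>r. y + r *\<^sub>R v) has_derivative (\<lambda>h. h *\<^sub>R v)) (at r)"
    by (auto intro!: derivative_eq_intros)
  have d2: "(g has_derivative (\<lambda>w. Dd w g ?z)) (at ?z)" using Dd_works assms by blast
  have lin: "linear (\<lambda>w. Dd w g ?z)" using d2 has_derivative_linear by blast
  have "((g \<circ> (\<lambda>r. y + r *\<^sub>R v)) has_derivative ((\<lambda>w. Dd w g ?z) \<circ> (\<lambda>h. h *\<^sub>R v))) (at r)"
    by (rule diff_chain_at[OF d1]) (use d2 in simp)
  moreover have "((\<lambda>w. Dd w g ?z) \<circ> (\<lambda>h. h *\<^sub>R v)) = (\<lambda>h. Dd v g ?z * h)"
    using linear_cmul[OF lin] by (auto simp: o_def mult.commute)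
  ultimately show ?thesis unfolding has_field_derivative_def by (simp add: o_def)
qed

lemma Delta_mvt:
  assumes dg: "\<And>z. g differentiable (at z)"
    and dgu: "\<And>z. Dd u g differentiable (at z)"
    and t: "t > 0"
  shows "\<exists>y. norm (y - x) \<le> t * (norm u + norm v) \<and>
     g (x + t *\<^sub>R u + t *\<^sub>R v) - g (x + t *\<^sub>R u) - g (x + t *\<^sub>R v) + g x
       = t * t * Dd v (Dd u g) y"
proof -
  define \<phi> where "\<phi> s = g ((x + t *\<^sub>R v) + s *\<^sub>R u) - g (x + s *\<^sub>R u)" for s
  have "\<And>s. DERIV \<phi> s :> Dd u g ((x + t *\<^sub>R v) + s *\<^sub>R u) - Dd u g (x + s *\<^sub>R u)"
    unfolding \<phi>_def by (intro DERIV_diff line_deriv dg)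
  then obtain s0 where s0: "0 < s0" "s0 < t"
    and e1: "\<phi> t - \<phi> 0 = (t - 0) * (Dd u g ((x + t *\<^sub>R v) + s0 *\<^sub>R u) - Dd u g (x + s0 *\<^sub>R u))"
    using MVT2[OF t, of \<phi> "\<lambda>s. Dd u g ((x + t *\<^sub>R v) + s *\<^sub>R u) - Dd u g (x + s *\<^sub>R u)"] by blast
  define \<psi> where "\<psi> r = Dd u g ((x + s0 *\<^sub>R u) + r *\<^sub>R v)" for r
  have "\<And>r. DERIV \<psi> r :> Dd v (Dd u g) ((x + s0 *\<^sub>R u) + r *\<^sub>R v)"
    unfolding \<psi>_def by (intro line_deriv dgu)
  then obtain r0 where r0: "0 < r0" "r0 < t"
    and e2: "\<psi> t - \<psi> 0 = (t - 0) * Dd v (Dd u g) ((x + s0 *\<^sub>R u) + r0 *\<^sub>R v)"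
    using MVT2[OF t, of \<psi> "\<lambda>r. Dd v (Dd u g) ((x + s0 *\<^sub>R u) + r *\<^sub>R v)"] by blast
  let ?y = "(x + s0 *\<^sub>R u) + r0 *\<^sub>R v"
  have "norm (?y - x) = norm (s0 *\<^sub>R u + r0 *\<^sub>R v)" by (simp add: algebra_simps)
  also have "\<dots> \<le> norm (s0 *\<^sub>R u) + norm (r0 *\<^sub>R v)" by (rule norm_triangle_ineq)
  also have "\<dots> \<le> t * norm u + t * norm v"
    using s0 r0 by (intro add_mono) (auto intro!: mult_right_mono)
  finally have n: "norm (?y - x) \<le> t * (norm u + norm v)" by (simp add: algebra_simps)
  have "g (x + t *\<^sub>R u + t *\<^sub>R v) - g (x + t *\<^sub>R u) - g (x + t *\<^sub>R v) + g x = \<phi> t - \<phi> 0"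
    unfolding \<phi>_def by (simp add: algebra_simps)
  also have "\<dots> = t * (\<psi> t - \<psi> 0)" using e1 unfolding \<psi>_def by (simp add: algebra_simps)
  also have "\<dots> = t * t * Dd v (Dd u g) ?y" using e2 by simp
  finally show ?thesis using n by blast
qed

lemma Dd_sym:
  assumes dg: "\<And>z. g differentiable (at z)"
    and dgu: "\<And>z. Dd u g differentiable (at z)"
    and dgv: "\<And>z. Dd v g differentiable (at z)"
    and c1: "continuous_on UNIV (Dd v (Dd u g))"
    and c2: "continuous_on UNIV (Dd u (Dd v g))"
  shows "Dd v (Dd u g) x = Dd u (Dd v g) x"
proof (rule ccontr)
  let ?G1 = "Dd v (Dd u g)" and ?G2 = "Dd u (Dd v g)"
  assume ne: "?G1 x \<noteq> ?G2 x"
  define e where "e = \<bar>?G1 x - ?G2 x\<bar> / 2"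
  have e: "e > 0" using ne by (simp add: e_def)
  obtain d1 where d1: "d1 > 0" "\<And>y. dist y x < d1 \<Longrightarrow> dist (?G1 y) (?G1 x) < e"
    using c1 e unfolding continuous_on_iff by (metis UNIV_I)
  obtain d2 where d2: "d2 > 0" "\<And>y. dist y x < d2 \<Longrightarrow> dist (?G2 y) (?G2 x) < e"
    using c2 e unfolding continuous_on_iff by (metis UNIV_I)
  define t where "t = min d1 d2 / (2 * (norm u + norm v + 1))"
  have nn: "norm u + norm v + 1 > 0" using norm_ge_zero[of u] norm_ge_zero[of v] by linarith
  have t: "t > 0" using d1 d2 nn unfolding t_def by (intro divide_pos_pos) auto
  have tb: "t * (norm u + norm v) < min d1 d2"
  proof -
    have "t * (norm u + norm v) \<le> t * (norm u + norm v + 1)" using t by simp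
    also have "\<dots> = min d1 d2 / 2" using nn unfolding t_def by (simp add: field_simps)
    also have "\<dots> < min d1 d2" using d1 d2 by (simp add: min_def)
    finally show ?thesis .
  qed
  obtain y1 where y1: "norm (y1 - x) \<le> t * (norm u + norm v)"
     "g (x + t *\<^sub>R u + t *\<^sub>R v) - g (x + t *\<^sub>R u) - g (x + t *\<^sub>R v) + g x = t * t * ?G1 y1"
    using Delta_mvt[OF dg dgu t] by blast
  obtain y2 where y2: "norm (y2 - x) \<le> t * (norm v + norm u)"
     "g (x + t *\<^sub>R v + t *\<^sub>R u) - g (x + t *\<^sub>R v) - g (x + t *\<^sub>R u) + g x = t * t * ?G2 y2"
    using Delta_mvt[OF dg dgv t] by blast
  have "t * t * ?G1 y1 = t * t * ?G2 y2" using y1(2) y2(2) by (simp add: algebra_simps)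
  hence eq: "?G1 y1 = ?G2 y2" using t by simp
  have "dist y1 x < d1" using y1(1) tb by (simp add: dist_norm)
  hence a: "\<bar>?G1 y1 - ?G1 x\<bar> < e" using d1(2) by (simp add: dist_real_def)
  have "dist y2 x < d2" using y2(1) tb by (simp add: dist_norm add.commute)
  hence b: "\<bar>?G2 y2 - ?G2 x\<bar> < e" using d2(2) by (simp add: dist_real_def)
  have aux: "\<And>A B C D :: real. \<bar>A - B\<bar> < \<bar>B - D\<bar> / 2 \<Longrightarrow> \<bar>C - D\<bar> < \<bar>B - D\<bar> / 2 \<Longrightarrow> A = C \<Longrightarrow> False"
    by (simp add: abs_if split: if_splits)
  from aux[OF a[unfolded e_def] b[unfolded e_def] eq] show False .
qed



lemma smooth_Dd: "smooth g \<Longrightarrow> smooth (Dd v g)"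
proof -
  assume "smooth g"
  hence "\<And>k. Ck (Suc k) g" unfolding smooth_def by blast
  hence "\<And>k. Ck k (\<lambda>x. frechet_derivative g (at x) v)" by simp
  moreover have "Dd v g = (\<lambda>x. frechet_derivative g (at x) v)" by (rule ext) (simp add: Dd_def)
  ultimately show ?thesis unfolding smooth_def by simp
qed

lemma smooth_differentiable: "smooth g \<Longrightarrow> g differentiable (at z)"
proof -
  assume "smooth g"
  hence "Ck 1 g" unfolding smooth_def by blast
  thus ?thesis by (simp add: differentiable_on_def)
qed

lemma smooth_cont: "smooth g \<Longrightarrow> continuous_on UNIV g"
  unfolding smooth_def by (metis Ck.simps(1))

lemma smooth_sym: "smooth g \<Longrightarrow> Dd v (Dd u g) = Dd u (Dd v g)"
  by (rule ext, rule Dd_sym) (auto intro: smooth_differentiable smooth_Dd smooth_cont)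

lemma dp_Dd: "dp i g = Dd (axis i 1, 0) g" by (rule ext) (simp add: dp_def Dd_def)
lemma dxi_Dd: "dxi i g = Dd (0, axis i 1) g" by (rule ext) (simp add: dxi_def Dd_def)

lemma Gam_fun: "Gam \<alpha> \<beta> f g = (\<lambda>x. (\<Sum>i\<in>UNIV. (dp i f x - \<alpha> * dxi i f x) * (dp i g x - \<alpha> * dxi i g x))
                     + \<beta> * (\<Sum>i\<in>UNIV. dxi i f x * dxi i g x))"
  by (rule ext) (simp add: Gam_def)

lemma Lop_fun: "Lop \<sigma> f = (\<lambda>x. (\<Sum>j\<in>UNIV. (fst x $ j) * dxi j f x)
                 + \<sigma>\<^sup>2 / 2 * (\<Sum>j\<in>UNIV. dp j (dp j f) x))"
  by (rule ext) (simp add: Lop_def)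

lemma fst_differentiable[simp]: "(\<lambda>y::'n::finite phase. fst y $ j) differentiable (at z)"
  using Dd_fst unfolding differentiable_def
  by (metis bounded_linear_compose[OF bounded_linear_vec_nth bounded_linear_fst] bounded_linear_imp_has_derivative)

lemma Dd_const[simp]: "Dd v (\<lambda>y. c) x = 0"
  by (rule Dd_eq[where g'="\<lambda>_. 0", simplified]) (rule has_derivative_const)

lemma Dd_add_fun: "(\<And>z. g differentiable (at z)) \<Longrightarrow> (\<And>z. h differentiable (at z)) \<Longrightarrow>
   Dd v (\<lambda>y. g y + h y) = (\<lambda>x. Dd v g x + Dd v h x)"
  by (rule ext) (simp add: Dd_add)
lemma Dd_diff_fun: "(\<And>z. g differentiable (at z)) \<Longrightarrow> (\<And>z. h differentiable (at z)) \<Longrightarrow>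
   Dd v (\<lambda>y. g y - h y) = (\<lambda>x. Dd v g x - Dd v h x)"
  by (rule ext) (simp add: Dd_diff)
lemma Dd_mult_fun: "(\<And>z. g differentiable (at z)) \<Longrightarrow> (\<And>z. h differentiable (at z)) \<Longrightarrow>
   Dd v (\<lambda>y. g y * h y) = (\<lambda>x. g x * Dd v h x + Dd v g x * h x)"
  by (rule ext) (simp add: Dd_mult)
lemma Dd_sum_fun: "(\<And>i z. i \<in> I \<Longrightarrow> G i differentiable (at z)) \<Longrightarrow>
   Dd v (\<lambda>y. \<Sum>i\<in>I. G i y) = (\<lambda>x. \<Sum>i\<in>I. Dd v (G i) x)"
  by (rule ext) (simp add: Dd_sum)
lemma Dd_const_fun: "Dd v (\<lambda>y. c) = (\<lambda>x. 0)" by (rule ext) simp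

definition eP :: "'n::finite \<Rightarrow> 'n phase" where "eP i = (axis i 1, 0)"
definition eX :: "'n::finite \<Rightarrow> 'n phase" where "eX i = (0, axis i 1)"
lemma fst_eP[simp]: "fst (eP i) $ j = (if j = i then 1 else 0)" by (simp add: eP_def axis_def)
lemma fst_eX[simp]: "fst (eX i) $ j = 0" by (simp add: eX_def)
lemma dp_eP: "dp i g = Dd (eP i) g" by (simp add: dp_Dd eP_def)
lemma dxi_eX: "dxi i g = Dd (eX i) g" by (simp add: dxi_Dd eX_def)

lemmas Dd_rules = Dd_add Dd_diff Dd_mult Dd_sum Dd_fst Dd_add_fun Dd_diff_fun Dd_mult_fun Dd_sum_fun Dd_const_fun


lemma SW:
  fixes p :: "'i::finite \<Rightarrow> real" and g1 g2 :: "'i \<Rightarrow> 'i \<Rightarrow> real"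
  shows "(\<Sum>j\<in>UNIV. p j * (\<Sum>i\<in>UNIV. g1 j i)) + c * (\<Sum>j\<in>UNIV. \<Sum>i\<in>UNIV. g2 j i)
       = (\<Sum>i\<in>UNIV. \<Sum>j\<in>UNIV. p j * g1 j i + c * g2 j i)"
proof -
  have "(\<Sum>i\<in>UNIV. \<Sum>j\<in>UNIV. p j * g1 j i + c * g2 j i)
      = (\<Sum>i\<in>UNIV. \<Sum>j\<in>UNIV. p j * g1 j i) + (\<Sum>i\<in>UNIV. \<Sum>j\<in>UNIV. c * g2 j i)"
    by (simp add: sum.distrib)
  also have "\<dots> = (\<Sum>j\<in>UNIV. \<Sum>i\<in>UNIV. p j * g1 j i) + (\<Sum>j\<in>UNIV. \<Sum>i\<in>UNIV. c * g2 j i)"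
    by (subst sum.swap, subst (2) sum.swap, rule refl)
  also have "\<dots> = (\<Sum>j\<in>UNIV. p j * (\<Sum>i\<in>UNIV. g1 j i)) + c * (\<Sum>j\<in>UNIV. \<Sum>i\<in>UNIV. g2 j i)"
    by (simp add: sum_distrib_left)
  finally show ?thesis ..
qed

lemma peri:
  fixes p :: "'i::finite \<Rightarrow> real" and Xp Xx Pp Px Ppp Ppx :: "'i \<Rightarrow> real"
  shows "1/2 * (\<Sum>j\<in>UNIV. p j * (2*((Fp - \<alpha>*Fx) * (Xp j - \<alpha>*Xx j)) + \<beta>*(2*(Fx * Xx j)))
     + c * ((2*((Fp - \<alpha>*Fx)*(Ppp j - \<alpha>*Ppx j)) + 2*((Pp j - \<alpha>*Px j)*(Pp j - \<alpha>*Px j)))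
        + \<beta>*(2*(Fx * Ppx j) + 2*(Px j * Px j))))
   - ((Fp - \<alpha>*Fx) * (((\<Sum>j\<in>UNIV. p j * Xp j) + Fx + c*(\<Sum>j\<in>UNIV. Ppp j))
        - \<alpha>*((\<Sum>j\<in>UNIV. p j*Xx j) + c*(\<Sum>j\<in>UNIV. Ppx j)))
      + \<beta>*(Fx*((\<Sum>j\<in>UNIV. p j*Xx j) + c*(\<Sum>j\<in>UNIV. Ppx j))))
   = \<alpha> * Fx * Fx - Fx * Fp + c*(\<Sum>j\<in>UNIV. (Pp j - \<alpha>*Px j)^2 + \<beta> * Px j^2)"
  by (simp add: sum_distrib_left sum.distrib sum_subtractf algebra_simps power2_eq_square)

lemma COMB: "1/2 * (\<Sum>i\<in>I. H i) - ((\<Sum>i\<in>I. K i) + (b::real) * (\<Sum>i\<in>I. M i))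
   = (\<Sum>i\<in>I. 1/2 * H i - (K i + b * M i))"
  by (simp add: sum_subtractf sum.distrib sum_distrib_left)

lemma ifmul: "(if P then 1 else 0) * (b::real) = (if P then b else 0)" by simp

lemma Dd_cdiv: "g differentiable (at x) \<Longrightarrow> Dd v (\<lambda>y. c * g y / d) x = c * Dd v g x / d"
  using Dd_cmult[of g x v "c / d"] by (simp add: field_simps)

theorem lemma2p3:
  fixes f :: "(real^'n) \<times> (real^'n) \<Rightarrow> real"
    and \<sigma> \<alpha> \<beta> :: real
  assumes "\<sigma> > 0" and "\<beta> \<ge> 0" and "smooth f"
  shows "\<forall>p \<xi>. Gam2 \<sigma> \<alpha> \<beta> f (p, \<xi>)
           \<ge> \<alpha> * (norm (grad_xi f (p, \<xi>)))\<^sup>2 - grad_xi f (p, \<xi>) \<bullet> grad_p f (p, \<xi>)"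
proof (intro allI)
  fix p \<xi> :: "real^'n"
  define x where "x = (p, \<xi>)"
  note sf = \<open>smooth f\<close>
  note S = sf smooth_Dd smooth_differentiable
  let ?\<Gamma> = "Gam \<alpha> \<beta> f f" and ?L = "Lop \<sigma> f"
  define Fp where "Fp i = Dd (eP i) f x" for i
  define Fx where "Fx i = Dd (eX i) f x" for i
  define Xp where "Xp j i = Dd (eX j) (Dd (eP i) f) x" for j i
  define Xx where "Xx j i = Dd (eX j) (Dd (eX i) f) x" for j i
  define Pp where "Pp j i = Dd (eP j) (Dd (eP i) f) x" for j i
  define Px where "Px j i = Dd (eP j) (Dd (eX i) f) x" for j i
  define Ppp where "Ppp j i = Dd (eP j) (Dd (eP j) (Dd (eP i) f)) x" for j i
  define Ppx where "Ppx j i = Dd (eP j) (Dd (eP j) (Dd (eX i) f)) x" for j i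
  note defs = Fp_def Fx_def Xp_def Xx_def Pp_def Px_def Ppp_def Ppx_def
  define Fp where "Fp i = Dd (eP i) f x" for i
  define Fx where "Fx i = Dd (eX i) f x" for i
  define Xp where "Xp j i = Dd (eX j) (Dd (eP i) f) x" for j i
  define Xx where "Xx j i = Dd (eX j) (Dd (eX i) f) x" for j i
  define Pp where "Pp j i = Dd (eP j) (Dd (eP i) f) x" for j i
  define Px where "Px j i = Dd (eP j) (Dd (eX i) f) x" for j i
  define Ppp where "Ppp j i = Dd (eP j) (Dd (eP j) (Dd (eP i) f)) x" for j i
  define Ppx where "Ppx j i = Dd (eP j) (Dd (eP j) (Dd (eX i) f)) x" for j i
  note defs = Fp_def Fx_def Xp_def Xx_def Pp_def Px_def Ppp_def Ppx_def
  have s1: "\<And>i j. Dd (eP i) (Dd (eX j) f) = Dd (eX j) (Dd (eP i) f)"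
    using smooth_sym[OF sf] by blast
  have s2: "\<And>i j. Dd (eX i) (Dd (eX j) f) = Dd (eX j) (Dd (eX i) f)"
    using smooth_sym[OF sf] by blast
  have s3: "\<And>i j. Dd (eP i) (Dd (eP j) (Dd (eP j) f)) = Dd (eP j) (Dd (eP j) (Dd (eP i) f))"
    using smooth_sym[OF smooth_Dd[OF sf]] smooth_sym[OF sf] by metis
  have s4: "\<And>i j. Dd (eX i) (Dd (eP j) (Dd (eP j) f)) = Dd (eP j) (Dd (eP j) (Dd (eX i) f))"
    using smooth_sym[OF smooth_Dd[OF sf]] smooth_sym[OF sf] by metis
  have G1: "Dd (eX j) ?\<Gamma> x = (\<Sum>i\<in>UNIV. 2*((Fp i - \<alpha> * Fx i) * (Xp j i - \<alpha> * Xx j i))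
      + \<beta> * (2 * (Fx i * Xx j i)))" for j
    unfolding defs by (simp add: Gam_fun dp_eP dxi_eX Dd_rules S sum.distrib sum_distrib_left)
  have G2: "Dd (eP j) (Dd (eP j) ?\<Gamma>) x = (\<Sum>i\<in>UNIV.
       (2 * ((Fp i - \<alpha> * Fx i) * (Ppp j i - \<alpha> * Ppx j i))
        + 2 * ((Pp j i - \<alpha> * Px j i) * (Pp j i - \<alpha> * Px j i)))
      + \<beta> * (2 * (Fx i * Ppx j i) + 2 * (Px j i * Px j i)))" for j
    unfolding defs by (simp add: Gam_fun dp_eP dxi_eX Dd_rules S sum.distrib sum_distrib_left)
  have L1: "Dd (eP i) ?L x = (\<Sum>j\<in>UNIV. p $ j * Xp j i) + Fx i
      + \<sigma>\<^sup>2/2 * (\<Sum>j\<in>UNIV. Ppp j i)" for i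
    unfolding defs by (simp add: Lop_fun dp_eP dxi_eX Dd_rules Dd_cdiv S sum.distrib s1 s3 x_def ifmul)
  have L2: "Dd (eX i) ?L x = (\<Sum>j\<in>UNIV. p $ j * Xx j i)
      + \<sigma>\<^sup>2/2 * (\<Sum>j\<in>UNIV. Ppx j i)" for i
    unfolding defs by (simp add: Lop_fun dp_eP dxi_eX Dd_rules Dd_cdiv S sum.distrib s2[of i] s4 x_def)
  have E0: "Gam2 \<sigma> \<alpha> \<beta> f x = 1/2 * ((\<Sum>j\<in>UNIV. p $ j * Dd (eX j) ?\<Gamma> x)
       + \<sigma>\<^sup>2/2 * (\<Sum>j\<in>UNIV. Dd (eP j) (Dd (eP j) ?\<Gamma>) x))
     - ((\<Sum>i\<in>UNIV. (Fp i - \<alpha> * Fx i) * (Dd (eP i) ?L x - \<alpha> * Dd (eX i) ?L x))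
        + \<beta> * (\<Sum>i\<in>UNIV. Fx i * Dd (eX i) ?L x))"
    unfolding Gam2_def Lop_def[of \<sigma> ?\<Gamma>] Gam_def[of \<alpha> \<beta> f ?L] dp_eP dxi_eX Fp_def Fx_def
    by (simp add: x_def)
  have E1: "Gam2 \<sigma> \<alpha> \<beta> f x = (\<Sum>i\<in>UNIV. 1/2 * (\<Sum>j\<in>UNIV. p $ j * (2*((Fp i - \<alpha>*Fx i) * (Xp j i - \<alpha>*Xx j i)) + \<beta>*(2*(Fx i * Xx j i)))
     + \<sigma>\<^sup>2/2 * ((2*((Fp i - \<alpha>*Fx i)*(Ppp j i - \<alpha>*Ppx j i)) + 2*((Pp j i - \<alpha>*Px j i)*(Pp j i - \<alpha>*Px j i)))
        + \<beta>*(2*(Fx i * Ppx j i) + 2*(Px j i * Px j i))))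
   - ((Fp i - \<alpha>*Fx i) * (((\<Sum>j\<in>UNIV. p $ j * Xp j i) + Fx i + \<sigma>\<^sup>2/2*(\<Sum>j\<in>UNIV. Ppp j i))
        - \<alpha>*((\<Sum>j\<in>UNIV. p $ j*Xx j i) + \<sigma>\<^sup>2/2*(\<Sum>j\<in>UNIV. Ppx j i)))
      + \<beta>*(Fx i*((\<Sum>j\<in>UNIV. p $ j*Xx j i) + \<sigma>\<^sup>2/2*(\<Sum>j\<in>UNIV. Ppx j i)))))"
    unfolding E0 G1 G2 L1 L2 SW COMB by (rule refl)
  also have "\<dots> = (\<Sum>i\<in>UNIV. \<alpha> * Fx i * Fx i - Fx i * Fp i
      + \<sigma>\<^sup>2/2 * (\<Sum>j\<in>UNIV. (Pp j i - \<alpha>*Px j i)^2 + \<beta> * Px j i^2))"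
    by (rule sum.cong[OF refl], rule peri)
  also have "\<dots> \<ge> (\<Sum>i\<in>UNIV. \<alpha> * Fx i * Fx i - Fx i * Fp i)"
    using \<open>\<beta> \<ge> 0\<close> by (intro sum_mono) (simp add: sum_nonneg)
  finally have fin: "Gam2 \<sigma> \<alpha> \<beta> f x \<ge> (\<Sum>i\<in>UNIV. \<alpha> * Fx i * Fx i - Fx i * Fp i)" .
  have "\<alpha> * (norm (grad_xi f x))\<^sup>2 - grad_xi f x \<bullet> grad_p f x = (\<Sum>i\<in>UNIV. \<alpha> * Fx i * Fx i - Fx i * Fp i)"
    unfolding power2_norm_eq_inner inner_vec_def grad_xi_def grad_p_def dp_eP dxi_eX Fp_def Fx_def
    by (simp add: sum_subtractf sum_distrib_left mult.assoc)
  with fin show "Gam2 \<sigma> \<alpha> \<beta> f (p, \<xi>) \<ge> \<alpha> * (norm (grad_xi f (p, \<xi>)))\<^sup>2 - grad_xi f (p, \<xi>) \<bullet> grad_p f (p, \<xi>)"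
    unfolding x_def by simp
qed
end
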